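(* Let $V:\mathbb{R}^d\to\mathbb{R}$ be smooth and growing to infinity fast enough that the diffusion $dX_t=-\nabla V(X_t)\,dt+\sigma\,dW_t$ (with constant $\sigma>0$ and $d$-dimensional Wiener process $W_t$) is ergodic and reversible with invariant density $\mu(x)\propto\exp(-\beta V(x))$, $\beta=2/\sigma^2$. Let $\mathcal{L}f=\frac{\sigma^2}{2}\Delta f-\nabla V\cdot\nabla f$ be its generator, self-adjoint on $L^2_\mu$, with eigenvalues $0=\lambda_0>\lambda_1\ge\dots\ge\lambda_m$ (the $m+1$ dominant ones) and corresponding $L^2_\mu$-orthonormal eigenfunctions $\varphi_0\equiv 1,\varphi_1,\dots,\varphi_m$. Suppose $\chi=(\chi_0,\dots,\chi_m)^\top$ consists of smooth functions with $\chi_i\ge 0$, $\sum_{i=0}^m\chi_i=1$, and $\mathrm{span}\{\chi_0,\dots,\chi_m\}=\mathrm{span}\{\varphi_0,\dots,\varphi_m\}$. Let $C\in\mathbb{R}^{(m+1)\times(m+1)}$ be the invertible matrix with $\chi(x)=C\varphi(x)$ for all $x$, where $\varphi=(\varphi_0,\dots,\varphi_m)^\top$, let $L=\mathrm{diag}(\lambda_0,\dots,\lambda_m)$, and set $\mathcal{Q}=CLC^{-1}$, so that $\mathcal{L}\chi=\mathcal{Q}\chi$ componentwise. Consider the effective dynamics induced by the collective variable $\chi$ on the latent space $\chi(\mathbb{R}^d)\subset\mathbb{R}^{m+1}$, i.e. $dz_t=\widetilde b(z_t)\,dt+\sigma A(z_t)\,dW_t$ with $\widetilde b_l(z)=\Pi_\chi(\mathcal{L}\chi_l)(z)$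 and $(AA^\top)_{lk}(z)=\Pi_\chi\big(\sum_{i,j=1}^d\partial_{x_i}\chi_l\,\partial_{x_j}\chi_k\big)(z)$, and with generator $\tilde{\mathcal{L}}f(z)=\widetilde b(z)\cdot\nabla_z f(z)+\frac12\mathrm{Tr}\big(\tilde\sigma\tilde\sigma^\top(z)\nabla_z^2f(z)\big)$, where $\tilde\sigma=\sigma A$. Then $\widetilde b(z)=\mathcal{Q}z$, i.e. the effective dynamics is $dz_t=\mathcal{Q}z_t\,dt+\tilde\sigma(z_t)\,dW_t$ with generator $\tilde{\mathcal{L}}f(z)=(\mathcal{Q}z)^\top\nabla_zf(z)+\frac12\mathrm{Tr}\big(\tilde\sigma\tilde\sigma^\top(z)\nabla_z^2f(z)\big)$. Moreover, for each $i=0,\dots,m$, letting $v_i^\top=e_i^\top C^{-1}$ (the left eigenvector of $\mathcal{Q}$ for $\lambda_i$, with $e_i$ the $i$-th unit vector), the linear function $\tilde\varphi_i(z)=v_i^\top z$ satisfies $\tilde{\mathcal{L}}\tilde\varphi_i=\lambda_i\tilde\varphi_i$; in particular $\tilde{\mathcal{L}}$ has the eigenvalues $\lambda_0,\dots,\lambda_m$.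
   Context: For a collective variable $\xi:\mathbb{R}^d\to\mathbb{R}^k$, the coordinate projection is $\Pi_\xi f(x)=\mathbb{E}_\mu\big(f(x')\mid\xi(x')=\xi(x)\big)$, the average of $f$ with respect to $\mu$ conditioned on the level set $\{x':\xi(x')=\xi(x)\}$; since it is constant on level sets it is regarded as a function of $z=\xi(x)$ on the latent space. $L^2_\mu$ is the space of square-integrable functions with inner product $\langle f,g\rangle_\mu=\int fg\,\mu\,dx$. *)

theory Defs
  imports "HOL-Analysis.Analysis" "HOL-Probability.Probability"
begin

definition pderiv_at :: "'n::finite \<Rightarrow> (real^'n \<Rightarrow> real) \<Rightarrow> real^'n \<Rightarrow> real" where
  "pderiv_at i f x = frechet_derivative f (at x) (axis i 1)"

fun dpart :: "'n::finite list \<Rightarrow> (real^'n \<Rightarrow> real) \<Rightarrow> real^'n \<Rightarrow> real" where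
  "dpart [] f = f"
| "dpart (i # is) f = pderiv_at i (dpart is f)"

definition smooth_fun :: "(real^'n::finite \<Rightarrow> real) \<Rightarrow> bool" where
  "smooth_fun f \<longleftrightarrow> (\<forall>is x. dpart is f differentiable (at x))"

definition grad :: "(real^'n::finite \<Rightarrow> real) \<Rightarrow> real^'n \<Rightarrow> real^'n" where
  "grad f x = (\<chi> i. pderiv_at i f x)"

definition laplacian :: "(real^'n::finite \<Rightarrow> real) \<Rightarrow> real^'n \<Rightarrow> real" where
  "laplacian f x = (\<Sum>i\<in>UNIV. pderiv_at i (pderiv_at i f) x)"

definition generator :: "real \<Rightarrow> (real^'n::finite \<Rightarrow> real) \<Rightarrow> (real^'n \<Rightarrow> real) \<Rightarrow> real^'n \<Rightarrow> real" where
  "generator \<sigma> V f x = \<sigma>\<^sup>2 / 2 * laplacian f x - grad V x \<bullet> grad f x"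

definition gibbs :: "real \<Rightarrow> (real^'n::finite \<Rightarrow> real) \<Rightarrow> (real^'n) measure" where
  "gibbs \<beta> V = density lborel
     (\<lambda>x. ennreal (exp (- \<beta> * V x) / (\<integral>y. exp (- \<beta> * V y) \<partial>lborel)))"

text \<open>Coordinate projection: g is (a version of) \<open>\<Pi>_\<xi> f\<close>, i.e. \<open>g(z) = E_M(f | \<xi> = z)\<close>:
  g is a Borel function on the latent space and \<open>g \<circ> \<xi>\<close> is the conditional expectation of f
  given the sigma-algebra generated by \<xi>.\<close>
definition coord_proj :: "'a measure \<Rightarrow> ('a \<Rightarrow> 'b::topological_space) \<Rightarrow> ('a \<Rightarrow> real) \<Rightarrow> ('b \<Rightarrow> real) \<Rightarrow> bool" where
  "coord_proj M \<xi> f g \<longleftrightarrow>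
     \<xi> \<in> M \<rightarrow>\<^sub>M borel \<and> g \<in> borel_measurable borel \<and> integrable M f \<and> integrable M (\<lambda>x. g (\<xi> x)) \<and>
     (\<forall>A\<in>sets borel. (LINT x : \<xi> -` A \<inter> space M | M. g (\<xi> x)) = (LINT x : \<xi> -` A \<inter> space M | M. f x))"

text \<open>Generator of the effective dynamics: \<open>b\<cdot>\<nabla>f + 1/2 Tr(\<sigma>\<^sup>2 a \<nabla>\<^sup>2 f)\<close>, with \<open>a = AA\<^sup>T\<close>.\<close>
definition eff_generator :: "real \<Rightarrow> (real^'k \<Rightarrow> real^'k) \<Rightarrow> (real^'k \<Rightarrow> real^'k^'k) \<Rightarrow>
    (real^'k::finite \<Rightarrow> real) \<Rightarrow> real^'k \<Rightarrow> real" where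
  "eff_generator \<sigma> b a f z = b z \<bullet> grad f z
     + 1/2 * (\<Sum>l\<in>UNIV. \<Sum>k\<in>UNIV. (\<sigma>\<^sup>2 * a z $ l $ k) * pderiv_at k (pderiv_at l f) z)"

end

theory Submission
  imports Defs
begin

lemma pderiv_lin:
  fixes f :: "'j::finite \<Rightarrow> real^'n::finite \<Rightarrow> real"
  assumes "\<And>j. f j differentiable (at x)"
  shows "pderiv_at i (\<lambda>y. \<Sum>j\<in>UNIV. c j * f j y) x = (\<Sum>j\<in>UNIV. c j * pderiv_at i (f j) x)"
proof -
  have d: "\<And>j. (f j has_derivative frechet_derivative (f j) (at x)) (at x)"
    using assms frechet_derivative_works by blast
  have "((\<lambda>y. \<Sum>j\<in>UNIV. c j * f j y) has_derivative
        (\<lambda>h. \<Sum>j\<in>UNIV. c j * frechet_derivative (f j) (at x) h)) (at x)"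
    by (intro has_derivative_sum has_derivative_mult_right d)
  then have eq: "frechet_derivative (\<lambda>y. \<Sum>j\<in>UNIV. c j * f j y) (at x)
      = (\<lambda>h. \<Sum>j\<in>UNIV. c j * frechet_derivative (f j) (at x) h)"
    by (rule frechet_derivative_at[symmetric])
  show ?thesis unfolding pderiv_at_def eq by simp
qed

lemma pderiv_linear_fun:
  fixes w :: "real^'n::finite"
  shows "pderiv_at l (\<lambda>z. w \<bullet> z) z = w $ l"
proof -
  have "((\<lambda>z. w \<bullet> z) has_derivative (\<lambda>h. w \<bullet> h)) (at z)"
    by (rule has_derivative_inner_right) (rule has_derivative_ident)
  then have eq: "frechet_derivative (\<lambda>z. w \<bullet> z) (at z) = (\<lambda>h. w \<bullet> h)"
    by (rule frechet_derivative_at[symmetric])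
  show ?thesis unfolding pderiv_at_def eq by (simp add: inner_axis)
qed

lemma pderiv_const:
  shows "pderiv_at l (\<lambda>z::real^'n::finite. c::real) z = 0"
proof -
  have "((\<lambda>z::real^'n. c) has_derivative (\<lambda>h. 0)) (at z)"
    by (rule has_derivative_const)
  then have eq: "frechet_derivative (\<lambda>z::real^'n. c) (at z) = (\<lambda>h. 0)"
    by (rule frechet_derivative_at[symmetric])
  show ?thesis unfolding pderiv_at_def eq by simp
qed

lemma inv_props:
  fixes C :: "real^'k::finite^'k"
  assumes "invertible C"
  shows "C ** matrix_inv C = mat 1 \<and> matrix_inv C ** C = mat 1"
  using assms unfolding invertible_def matrix_inv_def by (rule someI_ex)

lemma row_mult: "row i (A::real^'n::finite^'m::finite) v* B = row i (A ** B)"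
  by (simp add: row_def vector_matrix_mult_def matrix_matrix_mult_def vec_eq_iff)

theorem mainTheorem1:
  fixes V :: "real^'d \<Rightarrow> real"
    and \<sigma> :: real
    and lam :: "'k::finite \<Rightarrow> real"
    and \<phi> :: "'k \<Rightarrow> real^'d \<Rightarrow> real"
    and i0 :: 'k
    and chi :: "real^'d \<Rightarrow> real^'k"
    and C :: "real^'k^'k"
    and btil :: "real^'k \<Rightarrow> real^'k"
    and atil :: "real^'k \<Rightarrow> real^'k^'k"
  defines "\<beta> \<equiv> 2 / \<sigma>\<^sup>2"
  defines "\<mu> \<equiv> gibbs \<beta> V"
  defines "Q \<equiv> C ** (\<chi> i j. if i = j then lam i else 0) ** matrix_inv C"
  assumes \<sigma>_pos: "\<sigma> > 0"
    and V_smooth: "smooth_fun V"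
    and V_normalizable: "integrable lborel (\<lambda>x. exp (- \<beta> * V x))"
    \<comment> \<open>eigenpairs of the generator, L2(mu)-orthonormal\<close>
    and \<phi>_smooth: "\<And>i. smooth_fun (\<phi> i)"
    and \<phi>_eigen: "\<And>i x. generator \<sigma> V (\<phi> i) x = lam i * \<phi> i x"
    and \<phi>_L2: "\<And>i j. integrable \<mu> (\<lambda>x. \<phi> i x * \<phi> j x)"
    and \<phi>_orthonormal: "\<And>i j. (\<integral>x. \<phi> i x * \<phi> j x \<partial>\<mu>) = (if i = j then 1 else 0)"
    and \<phi>0: "\<And>x. \<phi> i0 x = 1"
    and lam0: "lam i0 = 0"
    and lam_neg: "\<And>i. i \<noteq> i0 \<Longrightarrow> lam i < 0"
    \<comment> \<open>these are the dominant eigenvalues: every other L2 eigenvalue lies below them\<close>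
    and lam_dominant: "\<And>f \<nu>. smooth_fun f \<Longrightarrow> (\<forall>x. generator \<sigma> V f x = \<nu> * f x) \<Longrightarrow>
        integrable \<mu> (\<lambda>x. (f x)\<^sup>2) \<Longrightarrow> \<not> (AE x in \<mu>. f x = 0) \<Longrightarrow> \<nu> \<notin> range lam \<Longrightarrow>
        (\<forall>i. \<nu> < lam i)"
    \<comment> \<open>the collective variable chi: smooth partition of unity spanning the same space as phi\<close>
    and chi_smooth: "\<And>l. smooth_fun (\<lambda>x. chi x $ l)"
    and chi_nonneg: "\<And>l x. chi x $ l \<ge> 0"
    and chi_sum: "\<And>x. (\<Sum>l\<in>UNIV. chi x $ l) = 1"
    and C_inv: "invertible C"
    and chi_C: "\<And>x. chi x = C *v (\<chi> i. \<phi> i x)"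
    \<comment> \<open>coefficients of the effective dynamics (versions of the coordinate projections)\<close>
    and btil_proj: "\<And>l. coord_proj \<mu> chi (generator \<sigma> V (\<lambda>x. chi x $ l)) (\<lambda>z. btil z $ l)"
    and atil_proj: "\<And>l k. coord_proj \<mu> chi
        (\<lambda>x. \<Sum>i\<in>UNIV. \<Sum>j\<in>UNIV. pderiv_at i (\<lambda>y. chi y $ l) x * pderiv_at j (\<lambda>y. chi y $ k) x)
        (\<lambda>z. atil z $ l $ k)"
  shows "(AE z in distr \<mu> borel chi. btil z = Q *v z)
    \<and> (\<forall>i. row i (matrix_inv C) \<noteq> 0
          \<and> row i (matrix_inv C) v* Q = lam i *\<^sub>R row i (matrix_inv C)
          \<and> (AE z in distr \<mu> borel chi.
               eff_generator \<sigma> btil atil (\<lambda>z. row i (matrix_inv C) \<bullet> z) z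
                 = lam i * (row i (matrix_inv C) \<bullet> z)))"
proof -
  define Ci where "Ci = matrix_inv C"
  define L :: "real^'k^'k" where "L = (\<chi> i j. if i = j then lam i else 0)"
  have CCi: "C ** Ci = mat 1" and CiC: "Ci ** C = mat 1"
    using inv_props[OF C_inv] unfolding Ci_def by auto
  have Qd: "Q = C ** L ** Ci" unfolding Q_def L_def Ci_def ..
  have CiQ: "Ci ** Q = L ** Ci"
  proof -
    have "Ci ** Q = ((Ci ** C) ** L) ** Ci" unfolding Qd by (simp only: matrix_mul_assoc)
    then show ?thesis by (simp add: CiC)
  qed
  have rowQ: "row i Ci v* Q = lam i *\<^sub>R row i Ci" for i
  proof -
    have "row i Ci v* Q = row i (L ** Ci)" by (simp add: row_mult CiQ)
    also have "\<dots> = lam i *\<^sub>R row i Ci"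
      by (simp add: row_def L_def matrix_matrix_mult_def vec_eq_iff if_distrib if_distribR cong: if_cong)
    finally show ?thesis .
  qed
  have rownz: "row i Ci \<noteq> 0" for i
  proof
    assume "row i Ci = 0"
    then have "row i (Ci ** C) = 0" using row_mult[of i Ci C] by (simp add: vector_matrix_mult_def vec_eq_iff)
    then have "(Ci ** C) $ i $ i = 0" by (simp add: row_def vec_eq_iff)
    then show False by (simp add: CiC mat_def)
  qed
  have diff0: "\<And>j x. \<phi> j differentiable (at x)"
  proof -
    fix j x
    have "dpart [] (\<phi> j) differentiable (at x)" using \<phi>_smooth[unfolded smooth_fun_def] by blast
    then show "\<phi> j differentiable (at x)" by simp
  qed
  have diff1: "\<And>j x i. pderiv_at i (\<phi> j) differentiable (at x)"
  proof -
    fix j x i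
    have "dpart [i] (\<phi> j) differentiable (at x)" using \<phi>_smooth[unfolded smooth_fun_def] by blast
    then show "pderiv_at i (\<phi> j) differentiable (at x)" by simp
  qed
  have chi_l: "(\<lambda>x. chi x $ l) = (\<lambda>x. \<Sum>j\<in>UNIV. C $ l $ j * \<phi> j x)" for l
    by (simp add: chi_C matrix_vector_mult_def)
  have d1: "pderiv_at i (\<lambda>x. chi x $ l) = (\<lambda>x. \<Sum>j\<in>UNIV. C $ l $ j * pderiv_at i (\<phi> j) x)" for i l
    unfolding chi_l by (rule ext, rule pderiv_lin[OF diff0])
  have d2: "pderiv_at i (pderiv_at i (\<lambda>x. chi x $ l)) x
      = (\<Sum>j\<in>UNIV. C $ l $ j * pderiv_at i (pderiv_at i (\<phi> j)) x)" for i l x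
    unfolding d1 by (rule pderiv_lin[OF diff1])
  have gen_chi: "generator \<sigma> V (\<lambda>x. chi x $ l) x = (\<Sum>j\<in>UNIV. C $ l $ j * (lam j * \<phi> j x))" for l x
  proof -
    have "generator \<sigma> V (\<lambda>x. chi x $ l) x = (\<Sum>j\<in>UNIV. C $ l $ j * generator \<sigma> V (\<phi> j) x)"
    proof -
      have lap: "laplacian (\<lambda>x. chi x $ l) x = (\<Sum>j\<in>UNIV. C $ l $ j * laplacian (\<phi> j) x)"
        unfolding laplacian_def d2 sum_distrib_left by (rule sum.swap)
      have gr: "grad V x \<bullet> grad (\<lambda>x. chi x $ l) x = (\<Sum>j\<in>UNIV. C $ l $ j * (grad V x \<bullet> grad (\<phi> j) x))"
      proof -
        have "grad V x \<bullet> grad (\<lambda>x. chi x $ l) x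
            = (\<Sum>i\<in>UNIV. \<Sum>j\<in>UNIV. C $ l $ j * (pderiv_at i V x * pderiv_at i (\<phi> j) x))"
          unfolding grad_def inner_vec_def d1 by (simp add: sum_distrib_left ac_simps)
        also have "\<dots> = (\<Sum>j\<in>UNIV. \<Sum>i\<in>UNIV. C $ l $ j * (pderiv_at i V x * pderiv_at i (\<phi> j) x))"
          by (rule sum.swap)
        also have "\<dots> = (\<Sum>j\<in>UNIV. C $ l $ j * (grad V x \<bullet> grad (\<phi> j) x))"
          unfolding grad_def inner_vec_def by (simp add: sum_distrib_left)
        finally show ?thesis .
      qed
      show ?thesis unfolding generator_def lap gr
        by (simp add: sum_distrib_left right_diff_distrib sum_subtractf ac_simps)
    qed
    then show ?thesis using \<phi>_eigen by simp
  qed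
  have Qchi: "(Q *v chi x) $ l = (\<Sum>j\<in>UNIV. C $ l $ j * (lam j * \<phi> j x))" for l x
  proof -
    have "Q *v chi x = (C ** L) *v (\<chi> i. \<phi> i x)"
    proof -
      have "Q ** C = (C ** L) ** (Ci ** C)" unfolding Qd by (simp only: matrix_mul_assoc)
      then have "Q ** C = C ** L" by (simp add: CiC)
      then show ?thesis unfolding chi_C matrix_vector_mul_assoc by simp
    qed
    then show ?thesis
      by (simp add: matrix_vector_mult_def matrix_matrix_mult_def L_def if_distrib if_distribR mult.assoc cong: if_cong)
  qed
  have gen_eq: "generator \<sigma> V (\<lambda>x. chi x $ l) x = (Q *v chi x) $ l" for l x
    using gen_chi Qchi by simp
  have AEl: "AE z in distr \<mu> borel chi. btil z $ l = (Q *v z) $ l" for l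
  proof -
    note cp = btil_proj[of l, unfolded coord_proj_def gen_eq]
    have chim[measurable]: "chi \<in> \<mu> \<rightarrow>\<^sub>M borel" using cp by blast
    have bm[measurable]: "(\<lambda>z. btil z $ l) \<in> borel_measurable borel" using cp by blast
    have qm[measurable]: "(\<lambda>z. (Q *v z) $ l) \<in> borel_measurable borel"
      by (intro borel_measurable_continuous_onI continuous_intros)
    show ?thesis
    proof (rule density_unique_real)
      show "integrable (distr \<mu> borel chi) (\<lambda>z. btil z $ l)"
        using cp by (subst integrable_distr_eq) auto
      show "integrable (distr \<mu> borel chi) (\<lambda>z. (Q *v z) $ l)"
        using cp by (subst integrable_distr_eq) auto
      fix A assume "A \<in> sets (distr \<mu> borel chi)"
      then have A[measurable]: "A \<in> sets borel" by simp
      have e: "(\<integral>z \<in> A. g z \<partial>distr \<mu> borel chi) = (LINT x : chi -` A \<inter> space \<mu> | \<mu>. g (chi x))"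
        if [measurable]: "g \<in> borel_measurable borel" for g :: "real^'k \<Rightarrow> real"
        unfolding set_lebesgue_integral_def
        by (subst integral_distr) (auto intro!: Bochner_Integration.integral_cong simp: indicator_def)
      show "(\<integral>z \<in> A. btil z $ l \<partial>distr \<mu> borel chi) = (\<integral>z \<in> A. (Q *v z) $ l \<partial>distr \<mu> borel chi)"
        using cp A by (simp add: e[OF bm] e[OF qm])
    qed
  qed
  have AE1: "AE z in distr \<mu> borel chi. btil z = Q *v z"
    by (subst vec_eq_iff) (rule AE_all_countable[THEN iffD2], simp add: AEl)
  have eg: "eff_generator \<sigma> btil atil (\<lambda>z. w \<bullet> z) z = btil z \<bullet> w" for w z
  proof -
    have "grad (\<lambda>z. w \<bullet> z) z = w" by (simp add: grad_def pderiv_linear_fun vec_eq_iff)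
    moreover have "pderiv_at k (pderiv_at l (\<lambda>z. w \<bullet> z)) z = 0" for k l
    proof -
      have "pderiv_at l (\<lambda>z. w \<bullet> z) = (\<lambda>z. w $ l)" by (rule ext, rule pderiv_linear_fun)
      then show ?thesis by (simp add: pderiv_const)
    qed
    ultimately show ?thesis unfolding eff_generator_def by simp
  qed
  have AE3: "AE z in distr \<mu> borel chi.
      eff_generator \<sigma> btil atil (\<lambda>z. row i Ci \<bullet> z) z = lam i * (row i Ci \<bullet> z)" for i
    using AE1
  proof eventually_elim
    case (elim z)
    have "eff_generator \<sigma> btil atil (\<lambda>z. row i Ci \<bullet> z) z = (Q *v z) \<bullet> row i Ci"
      using eg elim by simp
    also have "\<dots> = (row i Ci v* Q) \<bullet> z" using dot_lmul_matrix[of "row i Ci" Q z] by (simp add: inner_commute)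
    also have "\<dots> = lam i * (row i Ci \<bullet> z)" by (simp add: rowQ)
    finally show ?case .
  qed
  show ?thesis using AE1 AE3 rowQ rownz unfolding Ci_def by blast
qed

end
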